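(* Let $P$ be a causal stable system on $\mathcal{L}_{2e+}^n$ and let $\nu_k,\rho_k>0$ with $\nu_k\rho_k\le1/4$ for $k=1,2,\dots$. Suppose that for every sequence $(\tau_k)_{k\ge1}$ with $\tau_k\ge0$ and $\sum_{k=1}^\infty\tau_k=1$, $$\langle u,Pu\rangle\ge\Big(\sum_{k=1}^\infty\tau_k\nu_k\Big)\|u\|_2^2+\Big(\sum_{k=1}^\infty\tau_k\rho_k\Big)\|Pu\|_2^2\quad\forall u\in\mathcal{L}_{2+}.$$ Then $\theta(P)\le\arccos\big(2\sqrt{\sup_k\nu_k\rho_k}\big)$.
   Context: For $n\ge1$, $\mathcal{L}_2^n$ is the set of measurable $u:\mathbb{R}\to\mathbb{R}^n$ with $\|u\|_2^2=\int|u(t)|^2dt<\infty$, inner product $\langle u,v\rangle=\int u(t)^Tv(t)\,dt$; $\mathcal{L}_{2+}=\{u\in\mathcal{L}_2:u(t)=0\ \text{for}\ t<0\}$. For $T\ge0$, $(\Gamma_Tu)(t)=u(t)$ for $t\le T$, $0$ for $t>T$; $\mathcal{L}_{2e+}=\{u:\Gamma_Tu\in\mathcal{L}_{2+}\ \forall T\ge0\}$. A system is an operator $P:\mathcal{L}_{2e+}\to\mathcal{L}_{2e+}$ with $P0=0$, $P\ne0$; causal if $\Gamma_TP=\Gamma_TP\Gamma_T$ for all $T\ge0$; a causal system is stable if $Pu\in\mathcal{L}_{2+}$ for all $u\in\mathcal{L}_{2+}$ and $\sup_{0\ne u\in\mathcal{L}_{2+}}\|Pu\|_2/\|u\|_2<\infty$.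 The singular angle $\theta(P)\in[0,\pi]$ is given by $\cos\theta(P)=\inf\{\langle u,Pu\rangle/(\|u\|_2\|Pu\|_2):0\neq u\in\mathcal{L}_{2+},\ Pu\ne0\}$. *)

theory Defs
  imports "HOL-Analysis.Analysis"
begin

type_synonym 'n signal = "real \<Rightarrow> real ^ 'n"

definition L2 :: "'n::finite signal \<Rightarrow> bool" where
  "L2 u \<longleftrightarrow> u \<in> borel_measurable lebesgue \<and>
     integrable lebesgue (\<lambda>t. (norm (u t))^2)"

definition ip :: "'n::finite signal \<Rightarrow> 'n signal \<Rightarrow> real" where
  "ip u v = integral\<^sup>L lebesgue (\<lambda>t. u t \<bullet> v t)"

definition norm2 :: "'n::finite signal \<Rightarrow> real" where
  "norm2 u = sqrt (integral\<^sup>L lebesgue (\<lambda>t. (norm (u t))^2))"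

definition L2p :: "'n::finite signal \<Rightarrow> bool" where
  "L2p u \<longleftrightarrow> L2 u \<and> (AE t in lebesgue. t < 0 \<longrightarrow> u t = 0)"

definition trunc :: "real \<Rightarrow> 'n::finite signal \<Rightarrow> 'n signal" where
  "trunc T u = (\<lambda>t. if t \<le> T then u t else 0)"

definition L2ep :: "'n::finite signal \<Rightarrow> bool" where
  "L2ep u \<longleftrightarrow> (\<forall>T\<ge>0. L2p (trunc T u))"

definition ae_eq :: "'n::finite signal \<Rightarrow> 'n signal \<Rightarrow> bool" where
  "ae_eq u v \<longleftrightarrow> (AE t in lebesgue. u t = v t)"

definition is_system :: "('n::finite signal \<Rightarrow> 'n signal) \<Rightarrow> bool" where
  "is_system P \<longleftrightarrow> (\<forall>u. L2ep u \<longrightarrow> L2ep (P u)) \<and> ae_eq (P (\<lambda>t. 0)) (\<lambda>t. 0)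
     \<and> (\<exists>u. L2ep u \<and> \<not> ae_eq (P u) (\<lambda>t. 0))"

definition causal :: "('n::finite signal \<Rightarrow> 'n signal) \<Rightarrow> bool" where
  "causal P \<longleftrightarrow> is_system P \<and>
     (\<forall>T\<ge>0. \<forall>u. L2ep u \<longrightarrow> ae_eq (trunc T (P u)) (trunc T (P (trunc T u))))"

definition stable :: "('n::finite signal \<Rightarrow> 'n signal) \<Rightarrow> bool" where
  "stable P \<longleftrightarrow> causal P \<and> (\<forall>u. L2p u \<longrightarrow> L2p (P u)) \<and>
     bdd_above {norm2 (P u) / norm2 u | u. L2p u \<and> norm2 u \<noteq> 0}"

definition singular_angle :: "('n::finite signal \<Rightarrow> 'n signal) \<Rightarrow> real" where
  "singular_angle P = arccos (Inf {ip u (P u) / (norm2 u * norm2 (P u)) | u.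
      L2p u \<and> norm2 u \<noteq> 0 \<and> norm2 (P u) \<noteq> 0})"

end

theory Submission
  imports Defs
begin

lemma norm2_sq: "(norm2 u)^2 = integral\<^sup>L lebesgue (\<lambda>t. (norm (u t))^2)"
  unfolding norm2_def by (simp add: integral_nonneg_AE)

lemma norm2_ge0: "norm2 u \<ge> 0"
  unfolding norm2_def by simp

lemma norm2_zero:
  assumes "L2 u" "norm2 u = 0" shows "AE t in lebesgue. u t = 0"
proof -
  have i: "integrable lebesgue (\<lambda>t. (norm (u t))^2)" using assms(1) unfolding L2_def by auto
  have "integral\<^sup>L lebesgue (\<lambda>t. (norm (u t))^2) = 0" using assms(2) norm2_sq[of u] by simp
  then have "AE t in lebesgue. (norm (u t))^2 = 0"
    using integral_nonneg_eq_0_iff_AE[OF i] by simp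
  then show ?thesis by simp
qed

lemma amgm:
  fixes c x y :: real assumes "c > 0"
  shows "x * y \<le> c/2 * x^2 + (1/c)/2 * y^2"
proof -
  have "0 \<le> (c*x - y)^2" by simp
  then have "2*c*(x*y) \<le> c^2*x^2 + y^2" by (simp add: power2_eq_square algebra_simps)
  then have "(2*c*(x*y))/(2*c) \<le> (c^2*x^2 + y^2)/(2*c)" using assms by (intro divide_right_mono) auto
  also have "(2*c*(x*y))/(2*c) = x*y" using assms by simp
  also have "(c^2*x^2 + y^2)/(2*c) = c/2 * x^2 + (1/c)/2 * y^2" using assms
    by (simp add: power2_eq_square field_simps)
  finally show ?thesis .
qed

lemma ip_le:
  assumes "L2 u" "L2 v" "norm2 u > 0" "norm2 v > 0"
  shows "ip u v \<le> norm2 u * norm2 v"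
proof -
  define a where "a = norm2 u"
  define b where "b = norm2 v"
  have a: "a > 0" and b: "b > 0" using assms a_def b_def by auto
  have iu: "integrable lebesgue (\<lambda>t. (norm (u t))^2)" and mu: "u \<in> borel_measurable lebesgue"
    using assms(1) unfolding L2_def by auto
  have iv: "integrable lebesgue (\<lambda>t. (norm (v t))^2)" and mv: "v \<in> borel_measurable lebesgue"
    using assms(2) unfolding L2_def by auto
  have pw: "u t \<bullet> v t \<le> (b/a) / 2 * (norm (u t))^2 + (a/b) / 2 * (norm (v t))^2" for t
  proof -
    have "u t \<bullet> v t \<le> norm (u t) * norm (v t)" by (simp add: norm_cauchy_schwarz)
    also have "\<dots> \<le> (b/a) / 2 * (norm (u t))^2 + (1/(b/a)) / 2 * (norm (v t))^2"
      using a b by (intro amgm) auto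
    finally show ?thesis by simp
  qed
  have ig: "integrable lebesgue (\<lambda>t. (b/a) / 2 * (norm (u t))^2 + (a/b) / 2 * (norm (v t))^2)"
    using iu iv by auto
  have mi: "(\<lambda>t. u t \<bullet> v t) \<in> borel_measurable lebesgue" using mu mv by measurable
  have "integrable lebesgue (\<lambda>t. u t \<bullet> v t)"
  proof (rule Bochner_Integration.integrable_bound[OF ig mi], rule AE_I2)
    fix t
    have "\<bar>u t \<bullet> v t\<bar> \<le> norm (u t) * norm (v t)" by (simp add: Cauchy_Schwarz_ineq2)
    also have "\<dots> \<le> (b/a) / 2 * (norm (u t))^2 + (1/(b/a)) / 2 * (norm (v t))^2"
      using a b by (intro amgm) auto
    finally show "norm (u t \<bullet> v t) \<le> norm ((b/a) / 2 * (norm (u t))^2 + (a/b) / 2 * (norm (v t))^2)"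
      by simp
  qed
  then have "ip u v \<le> integral\<^sup>L lebesgue (\<lambda>t. (b/a) / 2 * (norm (u t))^2 + (a/b) / 2 * (norm (v t))^2)"
    unfolding ip_def using ig pw by (intro integral_mono) auto
  also have "\<dots> = (b/a)/2 * a^2 + (a/b)/2 * b^2"
    using iu iv by (simp add: a_def b_def norm2_sq)
  also have "\<dots> = a * b" using a b by (simp add: power2_eq_square field_simps)
  finally show ?thesis by (simp add: a_def b_def)
qed

lemma key_single:
  fixes \<nu> \<rho> :: "nat \<Rightarrow> real"
  assumes H: "\<And>\<tau>. (\<forall>k. \<tau> k \<ge> 0) \<Longrightarrow> \<tau> sums 1 \<Longrightarrow>
           summable (\<lambda>k. \<tau> k * \<nu> k) \<Longrightarrow> summable (\<lambda>k. \<tau> k * \<rho> k) \<Longrightarrow>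
           (\<forall>u. L2p u \<longrightarrow> ip u (P u) \<ge>
              (\<Sum>k. \<tau> k * \<nu> k) * (norm2 u)^2 + (\<Sum>k. \<tau> k * \<rho> k) * (norm2 (P u))^2)"
    and "L2p u"
  shows "ip u (P u) \<ge> \<nu> k * (norm2 u)^2 + \<rho> k * (norm2 (P u))^2"
proof -
  define \<tau> :: "nat \<Rightarrow> real" where "\<tau> = (\<lambda>j. if j = k then 1 else 0)"
  have e1: "(\<lambda>j. \<tau> j * \<nu> j) = (\<lambda>j. if j = k then \<nu> j else 0)" by (auto simp: \<tau>_def)
  have e2: "(\<lambda>j. \<tau> j * \<rho> j) = (\<lambda>j. if j = k then \<rho> j else 0)" by (auto simp: \<tau>_def)
  have s0: "\<tau> sums 1" unfolding \<tau>_def using sums_single[of k "\<lambda>_. 1::real"] by simp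
  have s1: "(\<lambda>j. \<tau> j * \<nu> j) sums \<nu> k" unfolding e1 by (rule sums_single)
  have s2: "(\<lambda>j. \<tau> j * \<rho> j) sums \<rho> k" unfolding e2 by (rule sums_single)
  have "\<forall>k. \<tau> k \<ge> 0" by (simp add: \<tau>_def)
  from H[OF this s0 sums_summable[OF s1] sums_summable[OF s2]] assms(2)
  show ?thesis using sums_unique[OF s1] sums_unique[OF s2] by simp
qed

theorem proposition4:
  fixes P :: "'n::finite signal \<Rightarrow> 'n signal"
    and \<nu> \<rho> :: "nat \<Rightarrow> real"
  assumes "causal P" and "stable P"
    and "\<And>k. \<nu> k > 0" and "\<And>k. \<rho> k > 0" and "\<And>k. \<nu> k * \<rho> k \<le> 1/4"
    and "\<And>\<tau>. (\<forall>k. \<tau> k \<ge> 0) \<Longrightarrow> \<tau> sums 1 \<Longrightarrow>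
           summable (\<lambda>k. \<tau> k * \<nu> k) \<Longrightarrow> summable (\<lambda>k. \<tau> k * \<rho> k) \<Longrightarrow>
           (\<forall>u. L2p u \<longrightarrow> ip u (P u) \<ge>
              (\<Sum>k. \<tau> k * \<nu> k) * (norm2 u)^2 + (\<Sum>k. \<tau> k * \<rho> k) * (norm2 (P u))^2)"
  shows "singular_angle P \<le> arccos (2 * sqrt (SUP k. \<nu> k * \<rho> k))"
proof -
  define X where "X = {ip u (P u) / (norm2 u * norm2 (P u)) | u.
      L2p u \<and> norm2 u \<noteq> 0 \<and> norm2 (P u) \<noteq> 0}"
  define S where "S = (SUP k. \<nu> k * \<rho> k)"
  have key: "ip u (P u) \<ge> \<nu> k * (norm2 u)^2 + \<rho> k * (norm2 (P u))^2" if "L2p u" for u k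
    using key_single[OF assms(6) that] .
  have stP: "L2p (P u)" if "L2p u" for u using assms(2) that unfolding stable_def by auto
  have S0: "0 \<le> S" unfolding S_def
  proof (rule cSUP_upper2[where x=0])
    show "bdd_above (range (\<lambda>k. \<nu> k * \<rho> k))" using assms(5) by (intro bdd_aboveI[where M="1/4"]) auto
    show "0 \<le> \<nu> 0 * \<rho> 0" using assms(3,4)[of 0] by simp
  qed simp
  have elem: "2 * sqrt S \<le> x \<and> x \<le> 1" if "x \<in> X" for x
  proof -
    obtain u where x: "x = ip u (P u) / (norm2 u * norm2 (P u))" and u: "L2p u"
      and nu: "norm2 u \<noteq> 0" and npu: "norm2 (P u) \<noteq> 0"
      using \<open>x \<in> X\<close> unfolding X_def by blast
    define a where "a = norm2 u"
    define b where "b = norm2 (P u)"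
    have a: "a > 0" using nu norm2_ge0[of u] a_def by linarith
    have b: "b > 0" using npu norm2_ge0[of "P u"] b_def by linarith
    have lk: "2 * sqrt (\<nu> k * \<rho> k) \<le> x" for k
    proof -
      have "0 \<le> (sqrt (\<nu> k) * a - sqrt (\<rho> k) * b)^2" by simp
      then have "2 * (sqrt (\<nu> k) * sqrt (\<rho> k)) * (a * b) \<le> (sqrt (\<nu> k))^2 * a^2 + (sqrt (\<rho> k))^2 * b^2"
        by (simp add: power2_eq_square algebra_simps)
      also have "\<dots> = \<nu> k * a^2 + \<rho> k * b^2" using assms(3,4)[of k] by (simp add: less_imp_le)
      also have "\<dots> \<le> ip u (P u)" using key[OF u, of k] a_def b_def by simp
      finally have "2 * sqrt (\<nu> k * \<rho> k) * (a * b) \<le> ip u (P u)" by (simp add: real_sqrt_mult)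
      then show ?thesis using a b x a_def b_def by (simp add: pos_le_divide_eq)
    qed
    have "0 \<le> sqrt (\<nu> 0 * \<rho> 0)" using assms(3,4)[of 0] by simp
    then have x0: "0 \<le> x" using lk[of 0] by linarith
    have "S \<le> (x/2)^2" unfolding S_def
    proof (rule cSUP_least)
      fix k
      have "sqrt (\<nu> k * \<rho> k) \<le> x/2" using lk[of k] by simp
      then have "(sqrt (\<nu> k * \<rho> k))^2 \<le> (x/2)^2" using assms(3,4)[of k] by (intro power_mono) simp_all
      then show "\<nu> k * \<rho> k \<le> (x/2)^2" using assms(3,4)[of k] by (simp add: less_imp_le)
    qed simp
    then have "sqrt S \<le> sqrt ((x/2)^2)" by (rule real_sqrt_le_mono)
    then have l: "2 * sqrt S \<le> x" using x0 by simp
    have "L2 u" "L2 (P u)" using u stP[OF u] unfolding L2p_def by auto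
    from ip_le[OF this] a b a_def b_def have "ip u (P u) \<le> a * b" by simp
    then have "x \<le> 1" using a b x a_def b_def by (simp add: divide_le_eq_1)
    with l show ?thesis by simp
  qed
  have ne: "X \<noteq> {}"
  proof -
    have sys: "is_system P" using assms(1) unfolding causal_def by auto
    then obtain u where u: "L2ep u" and nz: "\<not> ae_eq (P u) (\<lambda>t. 0)" unfolding is_system_def by auto
    have Pu: "L2ep (P u)" using sys u unfolding is_system_def by auto
    have "\<exists>n::nat. \<not> ae_eq (trunc (real n) (P u)) (\<lambda>t. 0)"
    proof (rule ccontr)
      assume "\<not> ?thesis"
      then have "\<forall>n::nat. AE t in lebesgue. trunc (real n) (P u) t = 0" unfolding ae_eq_def by auto
      then have A1: "AE t in lebesgue. \<forall>n::nat. trunc (real n) (P u) t = 0" by (simp add: AE_all_countable)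
      have "L2p (trunc 0 (P u))" using Pu unfolding L2ep_def by auto
      then have A2: "AE t in lebesgue. t < 0 \<longrightarrow> trunc 0 (P u) t = 0" unfolding L2p_def by auto
      have "AE t in lebesgue. P u t = 0"
        using A1 A2
      proof eventually_elim
        case (elim t)
        show ?case
        proof (cases "t < 0")
          case True then show ?thesis using elim(2) by (simp add: trunc_def)
        next
          case False
          obtain n :: nat where "t \<le> real n" using real_arch_simple by blast
          then show ?thesis using elim(1)[rule_format, of n] by (simp add: trunc_def)
        qed
      qed
      then show False using nz unfolding ae_eq_def by simp
    qed
    then obtain n :: nat where nzn: "\<not> ae_eq (trunc (real n) (P u)) (\<lambda>t. 0)" by blast
    define v where "v = trunc (real n) u"
    have v: "L2p v" using u unfolding L2ep_def v_def by auto
    have c: "ae_eq (trunc (real n) (P u)) (trunc (real n) (P v))"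
      using assms(1) u unfolding causal_def v_def by auto
    have Pv: "\<not> (AE t in lebesgue. P v t = 0)"
    proof
      assume "AE t in lebesgue. P v t = 0"
      with c have "AE t in lebesgue. trunc (real n) (P u) t = 0" unfolding ae_eq_def
        by eventually_elim (simp add: trunc_def)
      with nzn show False unfolding ae_eq_def by simp
    qed
    have nPv: "norm2 (P v) \<noteq> 0"
    proof
      assume "norm2 (P v) = 0"
      with norm2_zero[of "P v"] stP[OF v] have "AE t in lebesgue. P v t = 0" unfolding L2p_def by auto
      with Pv show False by simp
    qed
    have nv: "norm2 v \<noteq> 0"
    proof
      assume h: "norm2 v = 0"
      with norm2_zero[of v] v have "AE t in lebesgue. v t = 0" unfolding L2p_def by auto
      then have "AE t in lebesgue. v t \<bullet> P v t = 0" by eventually_elim simp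
      then have "ip v (P v) = 0" unfolding ip_def by (simp add: integral_eq_zero_AE)
      moreover have "ip v (P v) \<ge> \<nu> 0 * (norm2 v)^2 + \<rho> 0 * (norm2 (P v))^2" using key[OF v] .
      moreover have "\<rho> 0 * (norm2 (P v))^2 > 0" using assms(4)[of 0] nPv by simp
      ultimately show False using h by simp
    qed
    show ?thesis using v nv nPv unfolding X_def by blast
  qed
  have bdd: "bdd_below X" using elem by (intro bdd_belowI[where m="2 * sqrt S"]) auto
  have i1: "2 * sqrt S \<le> Inf X" using ne elem by (intro cInf_greatest) auto
  obtain x where "x \<in> X" using ne by blast
  then have i2: "Inf X \<le> 1" using cInf_lower[OF _ bdd] elem by (meson order_trans)
  have "arccos (Inf X) \<le> arccos (2 * sqrt S)"
  proof (rule arccos_le_arccos)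
    have "0 \<le> sqrt S" using S0 by simp
    then show "- 1 \<le> 2 * sqrt S" by linarith
  qed (use i1 i2 in auto)
  then show ?thesis unfolding singular_angle_def X_def S_def .
qed

end
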